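(* For all integers $n,i,k\ge0$, as an identity of polynomials in $q$, \[ {n+i\brack i}{n+k\brack k}=\sum_{j\ge0}(-1)^{i+j+k}\,q^{\frac{(k+i-j)(2n+k+i-j+1)}{2}}{j\brack j-i,\,j-k,\,i+k-j}{n+j\brack j}. \] Consequently, defining $P^{(1)}_{k,k}=1$, $P^{(1)}_{k,j}=0$ for $j\neq k$ and $P^{(r+1)}_{k,j}=\sum_i (-1)^{i+j+k}q^{\frac{(k+i-j)(k+i-j+1)}{2}}{j\brack j-i,\,j-k,\,i+k-j}P^{(r)}_{k,i}$, the $P^{(r)}_{k,j}$ are polynomials in $q$ with integer coefficients and ${n+k\brack k}^r=\sum_j q^{(rk-j)n}{n+j\brack j}P^{(r)}_{k,j}$ for all $n,k\ge0$, $r\ge1$.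
   Context: $q$ is an indeterminate; $(q)_0=1$, $(q)_m=(1-q)(1-q^2)\cdots(1-q^m)$. The $q$-binomial ${n\brack k}=\frac{(q)_n}{(q)_k(q)_{n-k}}$ if $0\le k\le n$ and $0$ otherwise. The $q$-multinomial ${m\brack a,b,c}=\frac{(q)_m}{(q)_a(q)_b(q)_c}$ if $a,b,c\ge0$ and $a+b+c=m$, and $0$ otherwise. *)

theory Defs
  imports "HOL-Computational_Algebra.Polynomial"
begin

text \<open>Polynomials in the indeterminate q are rendered as rat poly; q is the polynomial [:0,1:].\<close>

definition qX :: "rat poly" where "qX = [:0, 1:]"

definition qpoch :: "nat \<Rightarrow> rat poly" where
  "qpoch m = (\<Prod>i\<in>{1..m}. 1 - qX ^ i)"

text \<open>q-binomial coefficient (exact polynomial division).\<close>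
definition qbinom :: "nat \<Rightarrow> nat \<Rightarrow> rat poly" where
  "qbinom n k = (if k \<le> n then qpoch n div (qpoch k * qpoch (n - k)) else 0)"

definition qmultinom :: "nat \<Rightarrow> int \<Rightarrow> int \<Rightarrow> int \<Rightarrow> rat poly" where
  "qmultinom m a b c =
     (if a \<ge> 0 \<and> b \<ge> 0 \<and> c \<ge> 0 \<and> a + b + c = int m
      then qpoch m div (qpoch (nat a) * qpoch (nat b) * qpoch (nat c)) else 0)"

text \<open>Pq r k j is P^{(r)}_{k,j} for r \<ge> 1 (the value at r = 0 is an unused dummy).\<close>
fun Pq :: "nat \<Rightarrow> nat \<Rightarrow> nat \<Rightarrow> rat poly" where
  "Pq 0 k j = 0"
| "Pq (Suc 0) k j = (if j = k then 1 else 0)"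
| "Pq (Suc (Suc r)) k j =
     (\<Sum>i\<le>j. (-1) ^ (i + j + k) * qX ^ ((k + i - j) * (k + i - j + 1) div 2)
        * qmultinom j (int j - int i) (int j - int k) (int i + int k - int j) * Pq (Suc r) k i)"

end

theory Submission
  imports Defs
begin

definition pq :: "rat poly \<Rightarrow> nat \<Rightarrow> rat poly" where
  "pq a m = (\<Prod>t<m. 1 - a * qX ^ t)"

lemma pq_0[simp]: "pq a 0 = 1" by (simp add: pq_def)
lemma pq_Suc: "pq a (Suc m) = pq a m * (1 - a * qX ^ m)"
  by (simp add: pq_def)

lemma pq_add: "pq a (m + l) = pq a m * pq (a * qX ^ m) l"
proof (induction l)
  case 0 then show ?case by simp
next
  case (Suc l)
  then show ?case by (simp add: pq_Suc power_add mult.assoc)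
qed

lemma qpoch_0[simp]: "qpoch 0 = 1" by (simp add: qpoch_def)
lemma qpoch_Suc: "qpoch (Suc m) = qpoch m * (1 - qX ^ Suc m)"
  by (simp add: qpoch_def prod.cl_ivl_Suc)

lemma qpoch_pq: "qpoch m = pq qX m"
  by (induction m) (simp_all add: qpoch_Suc pq_Suc)

lemma qpoch_add: "qpoch (a + b) = qpoch a * pq (qX ^ Suc a) b"
  by (simp add: qpoch_pq pq_add)

lemma one_minus_qX_pow_nz: "i \<ge> 1 \<Longrightarrow> 1 - qX ^ i \<noteq> 0"
proof
  assume i: "i \<ge> 1" and z: "1 - qX ^ i = 0"
  have "poly (1 - qX ^ i) (2::rat) = 1 - 2 ^ i" by (simp add: qX_def)
  moreover have "(1::rat) < 2 ^ i" using i by (intro one_less_power) auto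
  ultimately show False using z by simp
qed

lemma qpoch_nz: "qpoch m \<noteq> 0"
  unfolding qpoch_def using one_minus_qX_pow_nz by auto

fun G :: "nat \<Rightarrow> nat \<Rightarrow> rat poly" where
  "G 0 b = 1"
| "G (Suc a) 0 = 1"
| "G (Suc a) (Suc b) = G (Suc a) b + qX ^ Suc b * G a (Suc b)"

lemma G_a0[simp]: "G a 0 = 1" by (cases a) auto

lemma ring_aux: "(P::'a::comm_ring_1) * (1 - y) + y * P * (1 - z) = P * (1 - y * z)"
  by (simp add: algebra_simps)

lemma G_eq: "G a b * qpoch a * qpoch b = qpoch (a + b)"
proof (induction a b rule: G.induct)
  case (1 b) then show ?case by simp
next
  case (2 a) then show ?case by simp
next
  case (3 a b)
  have e1: "G (Suc a) b * qpoch (Suc a) * qpoch b = qpoch (Suc (a + b))" using 3 by simp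
  have e2: "G a (Suc b) * qpoch a * qpoch (Suc b) = qpoch (Suc (a + b))" using 3 by simp
  have "G (Suc a) (Suc b) * qpoch (Suc a) * qpoch (Suc b)
      = (G (Suc a) b * qpoch (Suc a) * qpoch b) * (1 - qX ^ Suc b)
        + qX ^ Suc b * (G a (Suc b) * qpoch a * qpoch (Suc b)) * (1 - qX ^ Suc a)"
    by (simp only: G.simps qpoch_Suc) (simp add: algebra_simps)
  also have "\<dots> = qpoch (Suc (a + b)) * (1 - qX ^ Suc b) + qX ^ Suc b * qpoch (Suc (a+b)) * (1 - qX ^ Suc a)"
    using e1 e2 by simp
  also have "\<dots> = qpoch (Suc (a+b)) * (1 - qX ^ Suc b * qX ^ Suc a)" by (rule ring_aux)
  also have "qX ^ Suc b * qX ^ Suc a = qX ^ Suc (Suc (a + b))" by (simp add: power_add[symmetric] add.commute)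
  also have "qpoch (Suc (a+b)) * (1 - qX ^ Suc (Suc (a + b))) = qpoch (Suc a + Suc b)"
    by (simp add: qpoch_Suc)
  finally show ?case .
qed

lemma qbinom_G: "qbinom (a + b) a = G a b"
proof -
  have "qbinom (a + b) a = (G a b * (qpoch a * qpoch b)) div (qpoch a * qpoch b)"
    unfolding qbinom_def using G_eq[of a b] by (simp add: mult.assoc)
  also have "\<dots> = G a b" using qpoch_nz by simp
  finally show ?thesis .
qed

lemma qbinom_eq: "k \<le> m \<Longrightarrow> qbinom m k = G k (m - k)"
  using qbinom_G[of k "m - k"] by simp

lemma qbinom_mult: "k \<le> m \<Longrightarrow> qbinom m k * qpoch k * qpoch (m - k) = qpoch m"
  using qbinom_eq G_eq[of k "m-k"] by simp

lemma qbinom_zero: "m < k \<Longrightarrow> qbinom m k = 0" by (simp add: qbinom_def)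
lemma qbinom_n0[simp]: "qbinom m 0 = 1" using qbinom_eq[of 0 m] by (cases m) auto
lemma qbinom_nn[simp]: "qbinom m m = 1" using qbinom_eq[of m m] by simp

lemma qbinom_pascal: "qbinom (Suc i) (Suc e) = qbinom i (Suc e) + qX ^ (i - e) * qbinom i e"
proof (cases "e < i")
  case True
  then obtain b where i: "i = Suc e + b" by (metis less_imp_Suc_add add_Suc)
  have "qbinom (Suc i) (Suc e) = G (Suc e) (Suc b)" using qbinom_G[of "Suc e" "Suc b"] i by simp
  moreover have "qbinom i (Suc e) = G (Suc e) b" using qbinom_G[of "Suc e" b] i by simp
  moreover have "qbinom i e = G e (Suc b)" using qbinom_G[of e "Suc b"] i by simp
  moreover have "i - e = Suc b" using i by simp
  ultimately show ?thesis by simp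
next
  case False
  then show ?thesis
    by (cases "e = i") (auto simp: qbinom_zero)
qed

definition F :: "nat \<Rightarrow> nat \<Rightarrow> rat poly" where "F k d = (\<Prod>t<d. 1 - qX ^ (k - t))"
lemma F_0[simp]: "F k 0 = 1" by (simp add: F_def)
lemma F_Suc: "F k (Suc d) = F k d * (1 - qX ^ (k - d))" by (simp add: F_def)
lemma F_zero: "k < d \<Longrightarrow> F k d = 0"
  unfolding F_def by (rule prod_zero) (auto intro!: bexI[of _ k])

lemma qpoch_F: "d \<le> k \<Longrightarrow> qpoch k = qpoch (k - d) * F k d"
proof (induction d)
  case 0 then show ?case by (simp add: F_def)
next
  case (Suc d)
  have "k - d = Suc (k - Suc d)" using Suc.prems by simp
  then have "qpoch (k - d) = qpoch (k - Suc d) * (1 - qX ^ (k - d))" by (simp add: qpoch_Suc)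
  then show ?case using Suc by (simp add: F_Suc mult.assoc)
qed


lemma tri_Suc: "Suc d * (Suc d + 1) div 2 = d * (d + 1) div 2 + Suc d"
proof -
  have "Suc d * (Suc d + 1) = d * (d + 1) + 2 * Suc d" by simp
  then show ?thesis by simp
qed

lemma key:
  "pq (x * qX) i = (\<Sum>d\<le>i. qbinom i d * F k d * (-x)^d * qX^(d*(d+1) div 2) * pq (x * qX^Suc k) (i - d))"
proof (induction i)
  case 0 then show ?case by simp
next
  case (Suc i)
  define y where "y = x * qX ^ Suc k"
  define T where "T d = qbinom i d * F k d * (-x)^d * qX^(d*(d+1) div 2) * pq y (i - d)" for d
  define U where "U d = F k d * (-x)^d * qX^(d*(d+1) div 2) * pq y (Suc i - d)" for d
  have IH: "pq (x * qX) i = (\<Sum>d\<le>i. T d)" using Suc.IH by (simp add: T_def y_def)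
  have tm: "qbinom i d * U d + qX^(i-d) * qbinom i d * U (Suc d) = T d * (1 - x * qX ^ Suc i)"
    if d: "d \<le> i" for d
  proof (cases "d \<le> k")
    case True
    have e1: "U d = F k d * (-x)^d * qX^(d*(d+1) div 2) * pq y (i-d) * (1 - y*qX^(i-d))"
      unfolding U_def using d by (simp add: Suc_diff_le pq_Suc)
    have e2: "U (Suc d) = F k d * (1 - qX^(k-d)) * ((-x)^d * (-x)) * (qX^(d*(d+1) div 2) * qX^(Suc d)) * pq y (i-d)"
      unfolding U_def by (simp only: F_Suc tri_Suc power_add power_Suc2 diff_Suc_Suc)
    have e3: "y * qX^(i-d) = x * qX^(Suc k + (i-d))" by (simp add: y_def power_add mult.assoc)
    have e4: "qX^(i-d) * (1 - qX^(k-d)) * qX^(Suc d) = qX^(Suc i) - qX^(Suc k + (i-d))"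
    proof -
      have a: "qX^(i-d) * qX^(Suc d) = qX^(Suc i)" using d by (simp add: power_add[symmetric])
      have b: "qX^(i-d) * qX^(k-d) * qX^(Suc d) = qX^(Suc k + (i-d))"
        using d True by (simp add: power_add[symmetric] add.commute)
      have "qX^(i-d) * (1 - qX^(k-d)) * qX^(Suc d) = qX^(i-d)*qX^(Suc d) - qX^(i-d)*qX^(k-d)*qX^(Suc d)"
        by (simp add: algebra_simps)
      then show ?thesis by (simp only: a b)
    qed
    define W where "W = qbinom i d * F k d * (-x)^d * qX^(d*(d+1) div 2) * pq y (i-d)"
    have "qbinom i d * U d + qX^(i-d) * qbinom i d * U (Suc d)
        = W * (1 - y*qX^(i-d)) + W * (qX^(i-d) * (1 - qX^(k-d)) * qX^(Suc d)) * (-x)"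
      unfolding e1 e2 W_def by (simp add: algebra_simps)
    also have "\<dots> = W * (1 - x * qX ^ Suc i)" unfolding e3 e4 by (simp add: algebra_simps)
    finally show ?thesis by (simp add: W_def T_def)
  next
    case False
    then show ?thesis by (simp add: U_def T_def F_zero)
  qed
  have "(\<Sum>d\<le>Suc i. qbinom (Suc i) d * U d)
      = U 0 + (\<Sum>e\<le>i. qbinom (Suc i) (Suc e) * U (Suc e))"
    by (simp only: sum.atMost_Suc_shift) simp
  also have "\<dots> = (U 0 + (\<Sum>e\<le>i. qbinom i (Suc e) * U (Suc e)))
        + (\<Sum>e\<le>i. qX^(i-e) * qbinom i e * U (Suc e))"
    by (simp add: qbinom_pascal algebra_simps sum.distrib)
  also have "U 0 + (\<Sum>e\<le>i. qbinom i (Suc e) * U (Suc e)) = (\<Sum>d\<le>Suc i. qbinom i d * U d)"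
    by (simp only: sum.atMost_Suc_shift) simp
  also have "\<dots> = (\<Sum>d\<le>i. qbinom i d * U d)"
    by (simp add: qbinom_zero)
  also have "(\<Sum>d\<le>i. qbinom i d * U d) + (\<Sum>e\<le>i. qX^(i-e) * qbinom i e * U (Suc e))
      = (\<Sum>d\<le>i. T d * (1 - x * qX ^ Suc i))"
    by (simp add: sum.distrib[symmetric] tm)
  also have "\<dots> = pq (x * qX) (Suc i)"
    by (simp add: IH sum_distrib_right pq_Suc mult.assoc)
  finally show ?case by (simp add: U_def y_def mult.assoc)
qed


lemma qmult_G: "qmultinom (a+b+c) (int a) (int b) (int c) = G a (b+c) * G b c"
proof -
  have h1: "qpoch (a+b+c) = G a (b+c) * qpoch a * qpoch (b+c)" using G_eq[of a "b+c"] by (simp add: add.assoc)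
  have h2: "qpoch (b+c) = G b c * qpoch b * qpoch c" using G_eq[of b c] by simp
  have "qpoch (a+b+c) = (G a (b+c) * G b c) * (qpoch a * qpoch b * qpoch c)"
    by (subst h1, subst h2) (simp add: mult_ac)
  then show ?thesis unfolding qmultinom_def using qpoch_nz by simp
qed

lemma qmult_mult: "a + b + c = m \<Longrightarrow>
   qmultinom m (int a) (int b) (int c) * (qpoch a * qpoch b * qpoch c) = qpoch m"
proof -
  have h1: "qpoch (a+b+c) = G a (b+c) * qpoch a * qpoch (b+c)" using G_eq[of a "b+c"] by (simp add: add.assoc)
  have h2: "qpoch (b+c) = G b c * qpoch b * qpoch c" using G_eq[of b c] by simp
  assume h: "a + b + c = m"
  have "qmultinom (a+b+c) (int a) (int b) (int c) * (qpoch a * qpoch b * qpoch c) = qpoch (a+b+c)"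
    unfolding qmult_G by (subst h1, subst h2) (simp add: mult_ac)
  then show ?thesis using h by simp
qed

lemma qmult_zero: "\<not> (a \<ge> 0 \<and> b \<ge> 0 \<and> c \<ge> 0) \<Longrightarrow> qmultinom m a b c = 0"
  by (auto simp: qmultinom_def)

lemma expo: "(d::nat) * (2*n + d + 1) div 2 = n*d + d*(d+1) div 2"
proof -
  have "d * (2*n + d + 1) = d*(d+1) + (n*d) * 2" by (simp add: algebra_simps)
  then show ?thesis by simp
qed

lemma sum_rev: "(\<Sum>j\<le>(N::nat). g j) = (\<Sum>d\<le>N. g (N - d))"
  by (rule sum.reindex_bij_witness[of _ "\<lambda>d. N - d" "\<lambda>d. N - d"]) auto

lemma part1: "qbinom (n + i) i * qbinom (n + k) k =
   (\<Sum>j\<le>i + k. (-1) ^ (i + j + k) * qX ^ ((k + i - j) * (2 * n + k + i - j + 1) div 2)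
      * qmultinom j (int j - int i) (int j - int k) (int i + int k - int j) * qbinom (n + j) j)"
  (is "?L = ?R")
proof -
  define x where "x = qX ^ n"
  define E where "E m = pq (qX ^ Suc n) m" for m
  define N where "N = i + k"
  define V where "V d = qbinom i d * F k d * (-x)^d * qX^(d*(d+1) div 2) * E (k + i - d)" for d
  have BE: "qbinom (n + m) m * qpoch m = E m" for m
  proof -
    have "qbinom (n + m) m * qpoch m * qpoch n = qpoch n * E m"
      using qbinom_mult[of m "n+m"] qpoch_add[of n m] by (simp add: E_def mult_ac)
    then show ?thesis using qpoch_nz[of n] by (simp add: mult.commute)
  qed
  have xq: "x * qX = qX ^ Suc n" by (simp add: x_def power_Suc2)
  have Ek: "E k * pq (x * qX ^ Suc k) l = E (k + l)" for l
  proof -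
    have "qX ^ Suc n * qX ^ k = x * qX ^ Suc k" by (simp add: x_def power_add[symmetric])
    then show ?thesis unfolding E_def by (simp only: pq_add)
  qed
  have L: "?L * (qpoch i * qpoch k) = E i * E k"
    using BE[of i] BE[of k] by (simp add: mult_ac)
  have "E i * E k = (\<Sum>d\<le>i. qbinom i d * F k d * (-x)^d * qX^(d*(d+1) div 2) * pq (x * qX^Suc k) (i - d)) * E k"
    using key[of x i k] xq by (simp add: E_def)
  also have "\<dots> = (\<Sum>d\<le>i. V d)"
    unfolding sum_distrib_right V_def
  proof (rule sum.cong)
    fix d assume "d \<in> {..i}"
    then have "k + i - d = k + (i - d)" by simp
    then show "qbinom i d * F k d * (-x)^d * qX^(d*(d+1) div 2) * pq (x * qX^Suc k) (i - d) * E k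
        = qbinom i d * F k d * (-x)^d * qX^(d*(d+1) div 2) * E (k + i - d)"
      using Ek[of "i-d"] by (simp add: mult_ac)
  qed simp
  also have "\<dots> = (\<Sum>d\<le>N. V d)"
    by (rule sum.mono_neutral_left) (auto simp: N_def V_def qbinom_zero)
  finally have K: "E i * E k = (\<Sum>d\<le>N. V d)" .
  have R: "?R * (qpoch i * qpoch k) = (\<Sum>d\<le>N. V d)"
    unfolding sum_distrib_right N_def[symmetric]
    apply (subst sum_rev)
  proof (rule sum.cong)
    fix d assume "d \<in> {..N}"
    then have dN: "d \<le> N" by simp
    define j where "j = N - d"
    have kij: "k + i - j = d" using dN by (simp add: j_def N_def)
    have sgn: "(-1::rat poly) ^ (i + j + k) = (-1) ^ d"
    proof -
      have "i + j + k = d + 2 * j" using dN by (simp add: j_def N_def)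
      then show ?thesis by (simp only: power_add power_mult) simp
    qed
    have ex: "qX ^ (d * (2 * n + d + 1) div 2) = x ^ d * qX ^ (d*(d+1) div 2)"
      by (simp only: expo x_def power_add power_mult)
    have mx: "(-x)^d = (-1)^d * x^d" by (rule power_minus)
    show "(-1) ^ (i + (N - d) + k) * qX ^ ((k + i - (N - d)) * (2 * n + k + i - (N - d) + 1) div 2)
        * qmultinom (N - d) (int (N - d) - int i) (int (N - d) - int k) (int i + int k - int (N - d))
        * qbinom (n + (N - d)) (N - d) * (qpoch i * qpoch k) = V d"
      unfolding j_def[symmetric]
    proof -
      have ex2: "qX ^ ((k + i - j) * (2 * n + k + i - j + 1) div 2) = x ^ d * qX ^ (d*(d+1) div 2)"
      proof -
        have "2 * n + k + i - j + 1 = 2 * n + d + 1" using dN by (simp add: j_def N_def)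
        then show ?thesis unfolding kij using ex by simp
      qed
      consider (good) "d \<le> i" "d \<le> k" | (bi) "i < d" | (bk) "k < d" by linarith
      then show "(-1) ^ (i + j + k) * qX ^ ((k + i - j) * (2 * n + k + i - j + 1) div 2)
        * qmultinom j (int j - int i) (int j - int k) (int i + int k - int j)
        * qbinom (n + j) j * (qpoch i * qpoch k) = V d"
      proof cases
        case good
        have a1: "int j - int i = int (j - i)" "int j - int k = int (j - k)" "int i + int k - int j = int d"
          using good dN by (auto simp: j_def N_def)
        have M: "qmultinom j (int (j-i)) (int (j-k)) (int d) * (qpoch (j-i) * qpoch (j-k) * qpoch d) = qpoch j"
          by (rule qmult_mult) (use good dN in \<open>simp add: j_def N_def\<close>)
        have qi: "qpoch i = qbinom i d * qpoch d * qpoch (j - k)"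
          using qbinom_mult[of d i] good dN by (simp add: j_def N_def)
        have qk: "qpoch k = qpoch (j - i) * F k d"
          using qpoch_F[of d k] good dN by (simp add: j_def N_def)
        have jj: "k + i - d = j" using good dN by (simp add: j_def N_def)
        have "(-1) ^ (i + j + k) * qX ^ ((k + i - j) * (2 * n + k + i - j + 1) div 2)
          * qmultinom j (int j - int i) (int j - int k) (int i + int k - int j)
          * qbinom (n + j) j * (qpoch i * qpoch k)
          = (-1)^d * x ^ d * qX ^ (d*(d+1) div 2) * qbinom i d * F k d
            * (qmultinom j (int (j-i)) (int (j-k)) (int d) * (qpoch (j-i) * qpoch (j-k) * qpoch d))
            * (qbinom (n + j) j)"
          unfolding sgn ex2 a1 qi qk by (simp add: mult_ac)
        also have "\<dots> = (-1)^d * x ^ d * qX ^ (d*(d+1) div 2) * qbinom i d * F k d * E j"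
          unfolding M using BE[of j] by (simp add: mult_ac)
        finally show ?thesis by (simp add: V_def mx jj mult_ac)
      next
        case bi
        then show ?thesis using dN
          by (simp add: V_def qbinom_zero qmult_zero j_def N_def)
      next
        case bk
        then show ?thesis using dN
          by (simp add: V_def F_zero qmult_zero j_def N_def)
      qed
    qed
  qed simp
  have "?L * (qpoch i * qpoch k) = ?R * (qpoch i * qpoch k)" using L K R by simp
  then show ?thesis using qpoch_nz[of i] qpoch_nz[of k] by simp
qed


definition isint :: "rat poly \<Rightarrow> bool" where "isint p \<longleftrightarrow> (\<forall>m. coeff p m \<in> \<int>)"

lemma isint_add: "isint p \<Longrightarrow> isint q \<Longrightarrow> isint (p + q)"
  by (auto simp: isint_def)
lemma isint_mult: "isint p \<Longrightarrow> isint q \<Longrightarrow> isint (p * q)"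
  unfolding isint_def coeff_mult by (auto intro!: Ints_sum Ints_mult)
lemma isint_sum: "(\<And>x. x \<in> A \<Longrightarrow> isint (f x)) \<Longrightarrow> isint (sum f A)"
  unfolding isint_def coeff_sum by (auto intro!: Ints_sum)
lemma isint_1: "isint 1" by (auto simp: isint_def coeff_1)
lemma isint_0: "isint 0" by (auto simp: isint_def)
lemma isint_m1: "isint (-1)" by (auto simp: isint_def coeff_1)
lemma isint_qX: "isint qX" by (auto simp: isint_def qX_def coeff_pCons split: nat.split)
lemma isint_pow: "isint p \<Longrightarrow> isint (p ^ n)"
  by (induction n) (auto intro: isint_mult isint_1)

lemma isint_G: "isint (G a b)"
  by (induction a b rule: G.induct) (auto intro!: isint_add isint_mult isint_pow isint_qX isint_1)

lemma isint_qmult: "isint (qmultinom m a b c)"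
proof (cases "a \<ge> 0 \<and> b \<ge> 0 \<and> c \<ge> 0 \<and> a + b + c = int m")
  case True
  then have m: "m = nat a + nat b + nat c" by linarith
  have "qmultinom m a b c = G (nat a) (nat b + nat c) * G (nat b) (nat c)"
    using qmult_G[of "nat a" "nat b" "nat c"] True m by simp
  then show ?thesis by (simp add: isint_mult isint_G)
next
  case False
  then have "qmultinom m a b c = 0" unfolding qmultinom_def by auto
  then show ?thesis by (simp add: isint_0)
qed

lemma isint_Pq: "isint (Pq r k j)"
  by (induction r k j rule: Pq.induct)
     (auto intro!: isint_sum isint_mult isint_pow isint_qX isint_m1 isint_qmult isint_0 isint_1)

lemma Pq_zero: "Suc r * k < i \<Longrightarrow> Pq (Suc r) k i = 0"
proof (induction r arbitrary: i)
  case 0 then show ?case by simp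
next
  case (Suc r)
  show ?case unfolding Pq.simps
  proof (rule sum.neutral, rule ballI)
    fix i' assume "i' \<in> {..i}"
    show "(-1) ^ (i' + i + k) * qX ^ ((k + i' - i) * (k + i' - i + 1) div 2)
        * qmultinom i (int i - int i') (int i - int k) (int i' + int k - int i) * Pq (Suc r) k i' = 0"
    proof (cases "Suc r * k < i'")
      case True then show ?thesis using Suc.IH by simp
    next
      case False
      then have "int i' + int k - int i < 0" using Suc.prems by simp
      then show ?thesis by (simp add: qmult_zero)
    qed
  qed
qed

lemma part3: "qbinom (n + k) k ^ Suc r =
   (\<Sum>j\<le>Suc r * k. qX ^ ((Suc r * k - j) * n) * qbinom (n + j) j * Pq (Suc r) k j)"
proof (induction r)
  case 0
  have "(\<Sum>j\<le>k. qX ^ ((k - j) * n) * qbinom (n + j) j * Pq (Suc 0) k j)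
      = (\<Sum>j\<le>k. if j = k then qbinom (n + k) k else 0)"
    by (rule sum.cong) auto
  then show ?case by simp
next
  case (Suc r)
  define R where "R = Suc r * k"
  define R' where "R' = Suc (Suc r) * k"
  have RR: "R' = R + k" by (simp add: R_def R'_def)
  define M where "M i j = qmultinom j (int j - int i) (int j - int k) (int i + int k - int j)" for i j
  define B where "B j = qbinom (n + j) j" for j
  define P where "P i = Pq (Suc r) k i" for i
  define f where "f i j = qX ^ ((R' - j) * n) * B j * ((-1) ^ (i + j + k)
      * qX ^ ((k + i - j) * (k + i - j + 1) div 2) * M i j * P i)" for i j
  have Mz1: "j < i \<Longrightarrow> M i j = 0" for i j by (simp add: M_def qmult_zero)
  have Mz2: "i + k < j \<Longrightarrow> M i j = 0" for i j by (simp add: M_def qmult_zero)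
  have Pz: "R < i \<Longrightarrow> P i = 0" for i using Pq_zero by (simp add: P_def R_def)
  have "(\<Sum>j\<le>R'. qX ^ ((R' - j) * n) * B j * Pq (Suc (Suc r)) k j)
      = (\<Sum>j\<le>R'. \<Sum>i\<le>j. f i j)"
    by (simp add: f_def M_def P_def sum_distrib_left)
  also have "\<dots> = (\<Sum>j\<le>R'. \<Sum>i\<le>R'. f i j)"
    by (rule sum.cong[OF refl], rule sum.mono_neutral_left) (auto simp: f_def Mz1)
  also have "\<dots> = (\<Sum>i\<le>R'. \<Sum>j\<le>R'. f i j)" by (rule sum.swap)
  finally have RHS: "(\<Sum>j\<le>R'. qX ^ ((R' - j) * n) * B j * Pq (Suc (Suc r)) k j)
      = (\<Sum>i\<le>R'. \<Sum>j\<le>R'. f i j)" .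
  have "B k ^ Suc (Suc r) = B k * (\<Sum>i\<le>R. qX ^ ((R - i) * n) * B i * P i)"
    using Suc.IH by (simp add: B_def P_def R_def)
  also have "\<dots> = (\<Sum>i\<le>R. \<Sum>j\<le>i + k. qX ^ ((R - i) * n) * P i *
       ((-1) ^ (i + j + k) * qX ^ ((k + i - j) * (2 * n + k + i - j + 1) div 2) * M i j * B j))"
  proof -
    have P1: "B i * B k = (\<Sum>j\<le>i + k. (-1) ^ (i + j + k) * qX ^ ((k + i - j) * (2 * n + k + i - j + 1) div 2) * M i j * B j)" for i
      unfolding B_def M_def by (rule part1)
    have "B k * (\<Sum>i\<le>R. qX ^ ((R - i) * n) * B i * P i) = (\<Sum>i\<le>R. qX ^ ((R - i) * n) * P i * (B i * B k))"
      by (simp add: sum_distrib_left mult_ac)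
    also have "\<dots> = (\<Sum>i\<le>R. qX ^ ((R - i) * n) * P i * (\<Sum>j\<le>i + k. (-1) ^ (i + j + k) * qX ^ ((k + i - j) * (2 * n + k + i - j + 1) div 2) * M i j * B j))"
      unfolding P1 ..
    finally show ?thesis by (simp add: sum_distrib_left)
  qed
  also have "\<dots> = (\<Sum>i\<le>R. \<Sum>j\<le>i + k. f i j)"
  proof (rule sum.cong[OF refl], rule sum.cong[OF refl])
    fix i j assume i: "i \<in> {..R}" and j: "j \<in> {..i + k}"
    define d where "d = k + i - j"
    have e1: "2 * n + k + i - j + 1 = 2 * n + d + 1" using j by (simp add: d_def)
    have e2: "(R - i) * n + n * d = (R' - j) * n"
    proof -
      have "R - i + d = R' - j" using i j RR by (simp add: d_def)
      then show ?thesis by (metis add_mult_distrib mult.commute)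
    qed
    have ex: "qX ^ ((R - i) * n) * qX ^ ((k + i - j) * (2 * n + k + i - j + 1) div 2)
        = qX ^ ((R' - j) * n) * qX ^ ((k + i - j) * (k + i - j + 1) div 2)"
      unfolding e1 d_def[symmetric] expo power_add[symmetric] add.assoc[symmetric] e2 ..
    have "qX ^ ((R - i) * n) * P i *
       ((-1) ^ (i + j + k) * qX ^ ((k + i - j) * (2 * n + k + i - j + 1) div 2) * M i j * B j)
       = (qX ^ ((R - i) * n) * qX ^ ((k + i - j) * (2 * n + k + i - j + 1) div 2))
         * B j * ((-1) ^ (i + j + k) * M i j * P i)" by (simp add: mult_ac)
    also have "\<dots> = f i j" unfolding ex f_def by (simp add: mult_ac)
    finally show "qX ^ ((R - i) * n) * P i *
       ((-1) ^ (i + j + k) * qX ^ ((k + i - j) * (2 * n + k + i - j + 1) div 2) * M i j * B j)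
       = f i j" .
  qed
  also have "\<dots> = (\<Sum>i\<le>R. \<Sum>j\<le>R'. f i j)"
    by (rule sum.cong[OF refl], rule sum.mono_neutral_left) (auto simp: f_def Mz2 RR)
  also have "\<dots> = (\<Sum>i\<le>R'. \<Sum>j\<le>R'. f i j)"
    by (rule sum.mono_neutral_left) (auto simp: f_def Pz RR)
  finally show ?case using RHS by (simp add: B_def R'_def)
qed


theorem mainTheorem9:
  shows "(\<forall>n i k. qbinom (n + i) i * qbinom (n + k) k =
            (\<Sum>j\<le>i + k. (-1) ^ (i + j + k)
               * qX ^ ((k + i - j) * (2 * n + k + i - j + 1) div 2)
               * qmultinom j (int j - int i) (int j - int k) (int i + int k - int j)
               * qbinom (n + j) j))
       \<and> (\<forall>r k j m. r \<ge> 1 \<longrightarrow> coeff (Pq r k j) m \<in> \<int>)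
       \<and> (\<forall>n k r. r \<ge> 1 \<longrightarrow>
            qbinom (n + k) k ^ r =
            (\<Sum>j\<le>r * k. qX ^ ((r * k - j) * n) * qbinom (n + j) j * Pq r k j))"
proof (intro conjI allI impI)
  fix n i k show "qbinom (n + i) i * qbinom (n + k) k =
            (\<Sum>j\<le>i + k. (-1) ^ (i + j + k)
               * qX ^ ((k + i - j) * (2 * n + k + i - j + 1) div 2)
               * qmultinom j (int j - int i) (int j - int k) (int i + int k - int j)
               * qbinom (n + j) j)" by (rule part1)
next
  fix r k j m show "coeff (Pq r k j) m \<in> \<int>" using isint_Pq unfolding isint_def by blast
next
  fix n k r :: nat assume "r \<ge> 1"
  then obtain r' where "r = Suc r'" by (cases r) auto
  then show "qbinom (n + k) k ^ r =
            (\<Sum>j\<le>r * k. qX ^ ((r * k - j) * n) * qbinom (n + j) j * Pq r k j)"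
    using part3[of n k r'] by simp
qed

end
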